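(* Let $\mathcal{G}$ be any grouped weight partition of $\mathbb{F}_q^k$ and $t$ a positive integer. Then $$r_{\mathcal{G}}(k,t)=N\big(\mathcal{D}_{\mathcal{G}}(t;u_0,u_1,\ldots,u_k)\big),\qquad u_i=(\underbrace{1,\ldots,1}_{i},0,\ldots,0),\ i=0,\ldots,k.$$
   Context: Let $W_i=\{u\in\mathbb{F}_q^k:\mathrm{wt}(u)=i\}$ (Hamming weight). A grouped weight partition is a partition $\mathcal{G}=\{G_1,\ldots,G_m\}$ of $\mathbb{F}_q^k$ with $G_j=\bigcup_{i\in S_j}W_i$, where $S_1,\ldots,S_m$ form a partition of $\{0,\ldots,k\}$. A $(\mathcal{P},t)$-encoding with redundancy $r$ is a systematic map $\mathcal{C}:\mathbb{F}_q^k\to\mathbb{F}_q^{k+r}$, $\mathcal{C}(u)=(u,p(u))$, with Hamming distance $d(\mathcal{C}(u),\mathcal{C}(v))\ge 2t+1$ whenever $u,v$ lie in different blocks; $r_{\mathcal{P}}(k,t)$ is the minimum such $r$. For distinct $u_1,\ldots,u_M$, $\mathcal{D}_{\mathcal{P}}(t;u_1,\ldots,u_M)$ is the $M\times M$ matrix with $(i,j)$ entry $\max(2t+1-d(u_i,u_j),0)$ if $u_i,u_j$ lie in different blocks of $\mathcal{P}$ and $0$ otherwise. For $D\in\mathbb{N}^{M\times M}$, $N(D)$ is the smallest $r\ge0$ such that there exist $z_1,\ldots,z_M\in\mathbb{F}_q^r$ with $d(z_i,z_j)\ge D_{i,j}$ for all $i\ne j$. *)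

theory Defs
  imports Main "HOL-Library.Disjoint_Sets"
begin

definition hdist :: "'a list \<Rightarrow> 'a list \<Rightarrow> nat" where
  "hdist xs ys = card {i. i < length xs \<and> xs ! i \<noteq> ys ! i}"

definition wt :: "'a::zero list \<Rightarrow> nat" where
  "wt u = card {i. i < length u \<and> u ! i \<noteq> 0}"

text \<open>The grouped weight partition of F_q^k induced by a partition S of {0..k}:
  blocks G_j = union of W_i for i in S_j.\<close>
definition gw_partition :: "'a itself \<Rightarrow> nat \<Rightarrow> nat set set \<Rightarrow> ('a::zero list) set set" where
  "gw_partition _ k S = (\<lambda>s. {u. length u = k \<and> wt u \<in> s}) ` S"

definition different_blocks :: "'a set set \<Rightarrow> 'a \<Rightarrow> 'a \<Rightarrow> bool" where
  "different_blocks P u v = (\<exists>B\<in>P. \<exists>B'\<in>P. B \<noteq> B' \<and> u \<in> B \<and> v \<in> B')"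

definition is_encoding :: "'a list set set \<Rightarrow> nat \<Rightarrow> nat \<Rightarrow> nat \<Rightarrow> ('a list \<Rightarrow> 'a list) \<Rightarrow> bool" where
  "is_encoding P k t r p =
     ((\<forall>u. length u = k \<longrightarrow> length (p u) = r) \<and>
      (\<forall>u v. length u = k \<longrightarrow> length v = k \<longrightarrow> different_blocks P u v \<longrightarrow>
          hdist (u @ p u) (v @ p v) \<ge> 2 * t + 1))"

definition r_opt :: "'a list set set \<Rightarrow> nat \<Rightarrow> nat \<Rightarrow> nat" where
  "r_opt P k t = (LEAST r. \<exists>p. is_encoding P k t r p)"

text \<open>The M x M matrix D_P(t; u_0..u_{M-1}), indices 0..M-1; nat subtraction
  truncates at 0, giving max(2t+1-d,0).\<close>
definition Dmat :: "'a list set set \<Rightarrow> nat \<Rightarrow> (nat \<Rightarrow> 'a list) \<Rightarrow> nat \<Rightarrow> nat \<Rightarrow> nat" where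
  "Dmat P t us i j = (if different_blocks P (us i) (us j) then (2 * t + 1) - hdist (us i) (us j) else 0)"

definition N_min :: "'a itself \<Rightarrow> nat \<Rightarrow> (nat \<Rightarrow> nat \<Rightarrow> nat) \<Rightarrow> nat" where
  "N_min _ M D = (LEAST r. \<exists>z :: nat \<Rightarrow> 'a list.
      (\<forall>i<M. length (z i) = r) \<and>
      (\<forall>i<M. \<forall>j<M. i \<noteq> j \<longrightarrow> hdist (z i) (z j) \<ge> D i j))"

definition unit_prefix :: "nat \<Rightarrow> nat \<Rightarrow> 'a::{zero,one} list" where
  "unit_prefix k i = replicate i 1 @ replicate (k - i) 0"

end

theory Submission
  imports Defs
begin

lemma hdist_append:
  assumes "length a = length c" "length b = length d"
  shows "hdist (a@b) (c@d) = hdist a c + hdist b d"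
proof -
  let ?A = "{i. i < length a \<and> a!i \<noteq> c!i}"
  let ?B = "{i. i < length b \<and> b!i \<noteq> d!i}"
  have eq: "{i. i < length (a@b) \<and> (a@b)!i \<noteq> (c@d)!i} = ?A \<union> (\<lambda>i. i + length a) ` ?B"
  proof (rule set_eqI)
    fix i
    show "i \<in> {i. i < length (a@b) \<and> (a@b)!i \<noteq> (c@d)!i} \<longleftrightarrow> i \<in> ?A \<union> (\<lambda>i. i + length a) ` ?B"
    proof (cases "i < length a")
      case True then show ?thesis using assms by (auto simp: nth_append)
    next
      case False
      then have "i = (i - length a) + length a" by simp
      then show ?thesis using False assms
        by (auto simp: nth_append image_iff intro!: exI[of _ "i - length a"])
    qed
  qed
  have "card (?A \<union> (\<lambda>i. i + length a) ` ?B) = card ?A + card ((\<lambda>i. i + length a) ` ?B)"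
    by (rule card_Un_disjoint) auto
  also have "card ((\<lambda>i. i + length a) ` ?B) = card ?B"
    by (rule card_image) (auto simp: inj_on_def)
  finally show ?thesis unfolding hdist_def eq .
qed

lemma hdist_sym: "length u = length v \<Longrightarrow> hdist u v = hdist v u"
  unfolding hdist_def by (metis)

lemma wt_le: "length u = length v \<Longrightarrow> wt u \<le> wt v + hdist u v"
proof -
  assume l: "length u = length v"
  have "{i. i < length u \<and> u ! i \<noteq> 0} \<subseteq> {i. i < length v \<and> v ! i \<noteq> 0} \<union> {i. i < length u \<and> u ! i \<noteq> v ! i}"
    using l by auto
  then have "wt u \<le> card ({i. i < length v \<and> v ! i \<noteq> 0} \<union> {i. i < length u \<and> u ! i \<noteq> v ! i})"
    unfolding wt_def by (intro card_mono) auto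
  also have "\<dots> \<le> wt v + hdist u v" unfolding wt_def hdist_def by (rule card_Un_le)
  finally show ?thesis .
qed

lemma wt_length: "wt u \<le> length u"
  unfolding wt_def by (rule order.trans[OF card_mono[of "{..<length u}"]]) auto

lemma up_len: "length (unit_prefix k i :: 'a::{zero,one} list) = (if i \<le> k then k else i)"
  unfolding unit_prefix_def by auto

lemma up_nth: "i \<le> k \<Longrightarrow> n < k \<Longrightarrow> (unit_prefix k i :: 'a::{zero,one} list) ! n = (if n < i then 1 else 0)"
  unfolding unit_prefix_def by (auto simp: nth_append)

lemma up_wt: "i \<le> k \<Longrightarrow> wt (unit_prefix k i :: 'a::{zero_neq_one} list) = i"
proof -
  assume ik: "i \<le> k"
  have "{n. n < length (unit_prefix k i :: 'a list) \<and> (unit_prefix k i :: 'a list) ! n \<noteq> 0} = {..<i}"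
    using ik by (auto simp: up_len up_nth split: if_splits)
  then show ?thesis unfolding wt_def by simp
qed

lemma up_hdist: "i \<le> k \<Longrightarrow> j \<le> k \<Longrightarrow>
  hdist (unit_prefix k i :: 'a::{zero_neq_one} list) (unit_prefix k j) = (i - j) + (j - i)"
proof -
  assume ik: "i \<le> k" and jk: "j \<le> k"
  have "{n. n < length (unit_prefix k i :: 'a list) \<and> (unit_prefix k i :: 'a list) ! n \<noteq> (unit_prefix k j :: 'a list) ! n}
     = {min i j..<max i j}"
    using ik jk by (auto simp: up_len up_nth split: if_splits)
  then show ?thesis unfolding hdist_def by simp
qed

lemma main_equiv:
  fixes S :: "nat set set" and k t r :: nat
  assumes part: "partition_on {0..k} S"
  defines "P \<equiv> gw_partition TYPE('a::{finite,field}) k S"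
  shows "(\<exists>p. is_encoding P k t r p) \<longleftrightarrow>
    (\<exists>z :: nat \<Rightarrow> 'a list. (\<forall>i<k+1. length (z i) = r) \<and>
      (\<forall>i<k+1. \<forall>j<k+1. i \<noteq> j \<longrightarrow> hdist (z i) (z j) \<ge> Dmat P t (\<lambda>i. unit_prefix k i :: 'a list) i j))"
proof
  assume "\<exists>p. is_encoding P k t r p"
  then obtain p where enc: "is_encoding P k t r p" by blast
  define z where "z i = p (unit_prefix k i :: 'a list)" for i
  show "\<exists>z :: nat \<Rightarrow> 'a list. (\<forall>i<k+1. length (z i) = r) \<and>
      (\<forall>i<k+1. \<forall>j<k+1. i \<noteq> j \<longrightarrow> hdist (z i) (z j) \<ge> Dmat P t (\<lambda>i. unit_prefix k i :: 'a list) i j)"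
  proof (intro exI[of _ z] conjI allI impI)
    fix i assume "i < k+1"
    then show "length (z i) = r" using enc unfolding is_encoding_def z_def by (simp add: up_len)
  next
    fix i j assume i: "i < k+1" and j: "j < k+1" and ij: "i \<noteq> j"
    show "hdist (z i) (z j) \<ge> Dmat P t (\<lambda>i. unit_prefix k i :: 'a list) i j"
    proof (cases "different_blocks P (unit_prefix k i :: 'a list) (unit_prefix k j)")
      case True
      have li: "length (unit_prefix k i :: 'a list) = k" and lj: "length (unit_prefix k j :: 'a list) = k"
        using i j by (auto simp: up_len)
      have "hdist ((unit_prefix k i :: 'a list) @ z i) (unit_prefix k j @ z j) \<ge> 2*t+1"
        using enc True li lj unfolding is_encoding_def z_def by blast
      moreover have "length (z i) = r" "length (z j) = r"
        using enc li lj unfolding is_encoding_def z_def by auto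
      ultimately have "hdist (unit_prefix k i :: 'a list) (unit_prefix k j) + hdist (z i) (z j) \<ge> 2*t+1"
        using hdist_append li lj by metis
      then show ?thesis using True unfolding Dmat_def by simp
    next
      case False then show ?thesis unfolding Dmat_def by simp
    qed
  qed
next
  assume "\<exists>z :: nat \<Rightarrow> 'a list. (\<forall>i<k+1. length (z i) = r) \<and>
      (\<forall>i<k+1. \<forall>j<k+1. i \<noteq> j \<longrightarrow> hdist (z i) (z j) \<ge> Dmat P t (\<lambda>i. unit_prefix k i :: 'a list) i j)"
  then obtain z :: "nat \<Rightarrow> 'a list" where zl: "\<And>i. i<k+1 \<Longrightarrow> length (z i) = r"
    and zd: "\<And>i j. i<k+1 \<Longrightarrow> j<k+1 \<Longrightarrow> i \<noteq> j \<Longrightarrow> hdist (z i) (z j) \<ge> Dmat P t (\<lambda>i. unit_prefix k i :: 'a list) i j"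
    by blast
  define p where "p u = z (wt u)" for u :: "'a list"
  have "is_encoding P k t r p"
    unfolding is_encoding_def
  proof (intro conjI allI impI)
    fix u :: "'a list" assume "length u = k"
    then show "length (p u) = r" unfolding p_def using wt_length[of u] by (intro zl) simp
  next
    fix u v :: "'a list" assume lu: "length u = k" and lv: "length v = k" and db: "different_blocks P u v"
    define i where "i = wt u"
    define j where "j = wt v"
    have ik: "i \<le> k" and jk: "j \<le> k" using wt_length[of u] wt_length[of v] lu lv i_def j_def by auto
    from db obtain s s' where ss: "s \<in> S" "s' \<in> S" and ne: "{u :: 'a list. length u = k \<and> wt u \<in> s} \<noteq> {u. length u = k \<and> wt u \<in> s'}" and us: "wt u \<in> s" and vs: "wt v \<in> s'"
      unfolding different_blocks_def P_def gw_partition_def by auto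
    have ss3: "s \<noteq> s'" using ne by auto
    have dis: "s \<inter> s' = {}" using part ss ss3 unfolding partition_on_def disjoint_def by blast
    have ij: "i \<noteq> j" using us vs dis i_def j_def by auto
    have "different_blocks P (unit_prefix k i :: 'a list) (unit_prefix k j)"
      unfolding different_blocks_def P_def gw_partition_def
      apply (rule bexI[of _ "{u. length u = k \<and> wt u \<in> s}"])
       apply (rule bexI[of _ "{u. length u = k \<and> wt u \<in> s'}"])
      using ss ne us vs ik jk i_def j_def
      by (auto simp: up_len up_wt)
    then have "hdist (z i) (z j) \<ge> 2*t+1 - ((i - j) + (j - i))"
      using zd[of i j] ik jk ij unfolding Dmat_def by (simp add: up_hdist)
    moreover have "hdist u v \<ge> (i - j) + (j - i)"
      using wt_le[of u v] wt_le[of v u] hdist_sym[of u v] lu lv i_def j_def by auto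
    moreover have "length (p u) = length (p v)" unfolding p_def using zl ik jk i_def j_def by simp
    ultimately show "hdist (u @ p u) (v @ p v) \<ge> 2*t+1"
      using hdist_append[of u v "p u" "p v"] lu lv unfolding p_def i_def j_def by simp
  qed
  then show "\<exists>p. is_encoding P k t r p" by blast
qed

theorem corollary9:
  fixes S :: "nat set set" and k t :: nat
  assumes "partition_on {0..k} S"
    and "t > 0"
  shows "r_opt (gw_partition TYPE('a::{finite,field}) k S) k t =
         N_min TYPE('a) (k + 1)
           (Dmat (gw_partition TYPE('a) k S) t (\<lambda>i. unit_prefix k i :: 'a list))"
  unfolding r_opt_def N_min_def using main_equiv[OF assms(1), where 'a='a] by simp

end
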